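(* Let $\mathcal{G}$ be a hypergraph with at least one edge. Then $|\lambda_{\min}(A_{\mathcal{G}})|\ge 1/(r(\mathcal{G})-1)$, where $\lambda_{\min}(A_{\mathcal{G}})$ is the smallest eigenvalue of $A_{\mathcal{G}}$.
   Context: A hypergraph $\mathcal{G}=(V,E)$ has a finite vertex set $V$ and a set $E$ of subsets of $V$ (edges), each of cardinality at least $2$. The rank $r(\mathcal{G})$ is the maximum cardinality of an edge. The adjacency matrix $A_{\mathcal{G}}$ has $(A_{\mathcal{G}})_{ij}=\sum_{e\in E,\, i,j\in e}\frac{1}{|e|-1}$ for $i\ne j$ and zero diagonal. *)

theory Defs
  imports "HOL-Analysis.Analysis"
begin

text \<open>A hypergraph on the finite vertex type 'n (vertex set V = UNIV):
  a set E of edges, each a subset of V of cardinality at least 2.\<close>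
definition hypergraph :: "'n::finite set set \<Rightarrow> bool" where
  "hypergraph E \<longleftrightarrow> (\<forall>e\<in>E. card e \<ge> 2)"

definition hrank :: "'n::finite set set \<Rightarrow> nat" where
  "hrank E = Max (card ` E)"

definition hadj :: "'n::finite set set \<Rightarrow> real^'n^'n" where
  "hadj E = (\<chi> i j. if i = j then 0
      else (\<Sum>e\<in>{e\<in>E. i \<in> e \<and> j \<in> e}. 1 / (real (card e) - 1)))"

definition eigenvalues :: "real^'n^'n \<Rightarrow> real set" where
  "eigenvalues A = {l. \<exists>v. v \<noteq> 0 \<and> A *v v = l *\<^sub>R v}"

definition lambda_min :: "real^'n^'n \<Rightarrow> real" where
  "lambda_min A = Min (eigenvalues A)"

end

theory Submission
  imports Defs
begin

lemma sym_inner: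
  fixes A :: "real^'n^'n"
  assumes "transpose A = A"
  shows "x \<bullet> (A *v y) = y \<bullet> (A *v x)"
proof -
  have "x \<bullet> (A *v y) = (x v* A) \<bullet> y" by (simp add: dot_lmul_matrix)
  also have "x v* A = A *v x" using vector_transpose_matrix[of x A] assms by simp
  finally show ?thesis by (simp add: inner_commute)
qed

lemma sym_min_eig:
  fixes A :: "real^'n^'n"
  assumes sym: "transpose A = A"
  shows "\<exists>\<mu> x. x \<noteq> 0 \<and> A *v x = \<mu> *\<^sub>R x \<and> (\<forall>y. \<mu> * (y \<bullet> y) \<le> y \<bullet> (A *v y))"
proof -
  let ?q = "\<lambda>x::real^'n. x \<bullet> (A *v x)"
  have cont: "continuous_on (sphere 0 1) ?q"
    by (intro continuous_intros)
  obtain x where x: "x \<in> sphere (0::real^'n) 1" and xmin: "\<And>y. y \<in> sphere 0 1 \<Longrightarrow> ?q x \<le> ?q y"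
    using continuous_attains_inf[OF compact_sphere _ cont] by auto
  define \<mu> where "\<mu> = ?q x"
  have nx: "norm x = 1" using x by simp
  have xx: "x \<bullet> x = 1" using nx by (simp add: norm_eq_sqrt_inner)
  have ge: "\<mu> * (y \<bullet> y) \<le> ?q y" for y
  proof (cases "y = 0")
    case True then show ?thesis by simp
  next
    case False
    define u where "u = (1 / norm y) *\<^sub>R y"
    have "u \<in> sphere 0 1" using False by (simp add: u_def)
    then have "\<mu> \<le> ?q u" using xmin \<mu>_def by simp
    also have "?q u = ?q y / (norm y)^2"
      by (simp add: u_def matrix_vector_mult_scaleR power2_eq_square)
    finally have "\<mu> * (norm y)^2 \<le> ?q y" using False by (simp add: pos_le_divide_eq)
    then show ?thesis by (simp add: power2_norm_eq_inner)
  qed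
  define C where "C = (\<lambda>y. A *v y - \<mu> *\<^sub>R y)"
  have Cpos: "y \<bullet> C y \<ge> 0" for y using ge[of y] by (simp add: C_def inner_diff_right)
  have Cx: "x \<bullet> C x = 0" by (simp add: C_def inner_diff_right \<mu>_def xx)
  have Clin: "C (a + t *\<^sub>R b) = C a + t *\<^sub>R C b" for a b t
    by (simp add: C_def matrix_vector_right_distrib matrix_vector_mult_scaleR algebra_simps)
  have Csym: "a \<bullet> C b = b \<bullet> C a" for a b
    using sym_inner[OF sym, of a b] by (simp add: C_def inner_diff_right inner_commute)
  define z where "z = C x"
  define a where "a = z \<bullet> z"
  define b where "b = z \<bullet> C z"
  have quad: "2 * t * a + t^2 * b \<ge> 0" for t
  proof -
    have "0 \<le> (x + t *\<^sub>R z) \<bullet> C (x + t *\<^sub>R z)" by (rule Cpos)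
    also have "\<dots> = x \<bullet> C x + t * (x \<bullet> C z) + t * (z \<bullet> C x) + t^2 * (z \<bullet> C z)"
      by (simp add: Clin inner_add_left inner_add_right power2_eq_square algebra_simps)
    also have "x \<bullet> C z = z \<bullet> C x" by (rule Csym)
    finally show ?thesis using Cx by (simp add: a_def b_def z_def)
  qed
  have a0: "a = 0"
  proof (rule ccontr)
    assume "a \<noteq> 0"
    then have ap: "a > 0" using a_def by simp
    define t where "t = - a / (\<bar>b\<bar> + 1)"
    have d: "\<bar>b\<bar> + 1 > 0" by simp
    have "2 * t * a + t^2 * b \<le> 2 * t * a + t^2 * (\<bar>b\<bar> + 1)"
      by (intro add_left_mono mult_left_mono) auto
    also have "\<dots> = (- (a^2)) / (\<bar>b\<bar> + 1)"
    proof -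
      have tc: "t * (\<bar>b\<bar> + 1) = - a" using d by (simp add: t_def)
      have "t^2 * (\<bar>b\<bar> + 1) = t * (t * (\<bar>b\<bar> + 1))" by (simp add: power2_eq_square)
      then have "2 * t * a + t^2 * (\<bar>b\<bar> + 1) = t * a" using tc by simp
      also have "t * a = (- (a^2)) / (\<bar>b\<bar> + 1)" by (simp add: t_def power2_eq_square)
      finally show ?thesis .
    qed
    also have "\<dots> < 0" using ap d by simp
    finally show False using quad[of t] by simp
  qed
  then have "C x = 0" by (simp add: a_def z_def)
  then have "A *v x = \<mu> *\<^sub>R x" by (simp add: C_def)
  moreover have "x \<noteq> 0" using nx by auto
  ultimately show ?thesis using ge by blast
qed

lemma eig_finite:
  fixes A :: "real^'n^'n"
  assumes sym: "transpose A = A"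
  shows "finite (eigenvalues A)"
proof -
  define v where "v = (\<lambda>l. SOME v. v \<noteq> 0 \<and> A *v v = l *\<^sub>R v)"
  have vp: "v l \<noteq> 0 \<and> A *v v l = l *\<^sub>R v l" if "l \<in> eigenvalues A" for l
    using that unfolding eigenvalues_def v_def by (metis (mono_tags, lifting) someI_ex mem_Collect_eq)
  have orth: "v l \<bullet> v m = 0" if "l \<in> eigenvalues A" "m \<in> eigenvalues A" "l \<noteq> m" for l m
  proof -
    have "v l \<bullet> (A *v v m) = v m \<bullet> (A *v v l)" by (rule sym_inner[OF sym])
    then have "m * (v l \<bullet> v m) = l * (v l \<bullet> v m)"
      using vp[OF that(1)] vp[OF that(2)] by (simp add: inner_commute)
    then show ?thesis using that(3) by simp
  qed
  have inj: "inj_on v (eigenvalues A)"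
  proof
    fix l m assume h: "l \<in> eigenvalues A" "m \<in> eigenvalues A" "v l = v m"
    show "l = m"
    proof (rule ccontr)
      assume "l \<noteq> m"
      then have "v l \<bullet> v l = 0" using orth[OF h(1,2)] h(3) by simp
      then show False using vp[OF h(1)] by simp
    qed
  qed
  have "pairwise orthogonal (v ` eigenvalues A)"
    unfolding pairwise_def orthogonal_def using orth by fastforce
  moreover have "0 \<notin> v ` eigenvalues A" using vp by force
  ultimately have "independent (v ` eigenvalues A)" by (rule pairwise_orthogonal_independent)
  then have "finite (v ` eigenvalues A)" by (rule independent_imp_finite)
  then show ?thesis using inj finite_imageD by blast
qed

lemma ax_inner: "axis k (1::real) \<bullet> v = v $ k" for v :: "real^'n"
  by (simp add: inner_axis')

lemma col_nth: "column i A $ k = A $ k $ i" for A :: "real^'n^'n"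
  by (simp add: column_def)

theorem corollary2:
  fixes E :: "'n::finite set set"
  assumes "hypergraph E"
    and "E \<noteq> {}"
  shows "\<bar>lambda_min (hadj E)\<bar> \<ge> 1 / (real (hrank E) - 1)"
proof -
  define A where "A = hadj E"
  have Asym: "A $ k $ l = A $ l $ k" for k l
  proof -
    have "{e\<in>E. k \<in> e \<and> l \<in> e} = {e\<in>E. l \<in> e \<and> k \<in> e}" by blast
    then show ?thesis by (simp add: A_def hadj_def)
  qed
  have sym: "transpose A = A"
    unfolding transpose_def by (simp add: vec_eq_iff Asym)
  obtain \<mu> x where x0: "x \<noteq> 0" and ev: "A *v x = \<mu> *\<^sub>R x"
    and ge: "\<And>y. \<mu> * (y \<bullet> y) \<le> y \<bullet> (A *v y)"
    using sym_min_eig[OF sym] by blast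
  have mem: "\<mu> \<in> eigenvalues A" unfolding eigenvalues_def using x0 ev by blast
  have lower: "\<mu> \<le> l" if "l \<in> eigenvalues A" for l
  proof -
    have "\<exists>v. v \<noteq> 0 \<and> A *v v = l *\<^sub>R v" using that by (simp add: eigenvalues_def)
    then obtain v where v: "v \<noteq> 0" "A *v v = l *\<^sub>R v" by blast
    have "v \<bullet> (A *v v) = l * (v \<bullet> v)" using v(2) by simp
    then have "\<mu> * (v \<bullet> v) \<le> l * (v \<bullet> v)" using ge[of v] by linarith
    moreover have "v \<bullet> v > 0" using v(1) by simp
    ultimately show ?thesis using mult_le_cancel_right_pos by blast
  qed
  have lm: "lambda_min A = \<mu>"
    unfolding lambda_min_def
    by (rule Min_eqI[OF eig_finite[OF sym]]) (use lower mem in auto)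
  obtain e where e: "e \<in> E" using assms(2) by blast
  have ce: "card e \<ge> 2" using assms(1) e unfolding hypergraph_def by blast
  have fe: "finite e" by simp
  obtain i where i: "i \<in> e" using ce by fastforce
  have "card (e - {i}) \<ge> 1" using ce i fe by (simp add: card_Diff_singleton)
  then have "e - {i} \<noteq> {}" by (metis card.empty not_one_le_zero)
  then obtain j where j: "j \<in> e - {i}" by blast
  have ij: "i \<in> e" "j \<in> e" "i \<noteq> j" using i j by auto
  have finE: "finite E" by simp
  have re: "card e \<le> hrank E" unfolding hrank_def using finE e by (intro Max_ge) auto
  define r where "r = real (hrank E)"
  have r2: "r \<ge> 2" using re ce unfolding r_def by linarith
  have Aij: "A $ i $ j \<ge> 1 / (r - 1)"
  proof -
    let ?S = "{e\<in>E. i \<in> e \<and> j \<in> e}"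
    have Aij': "A $ i $ j = (\<Sum>f\<in>?S. 1 / (real (card f) - 1))"
      using ij(3) by (simp add: A_def hadj_def)
    have nn: "\<forall>f\<in>?S. 0 \<le> 1 / (real (card f) - 1)"
    proof
      fix f assume "f \<in> ?S"
      then have "card f \<ge> 2" using assms(1) unfolding hypergraph_def by blast
      then show "0 \<le> 1 / (real (card f) - 1)" by simp
    qed
    have "1 / (real (card e) - 1) \<le> (\<Sum>f\<in>?S. 1 / (real (card f) - 1))"
    proof (rule member_le_sum)
      show "e \<in> ?S" using e ij by blast
      show "finite ?S" by simp
      fix f assume "f \<in> ?S - {e}"
      then show "0 \<le> 1 / (real (card f) - 1)" using nn by blast
    qed
    moreover have "1 / (r - 1) \<le> 1 / (real (card e) - 1)"
    proof -
      have h1: "real (card e) - 1 \<le> r - 1" using re unfolding r_def by simp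
      have h2: "real (card e) - 1 > 0" using ce by simp
      show ?thesis using h1 h2 by (simp add: frac_le)
    qed
    ultimately show ?thesis using Aij' by linarith
  qed
  define y :: "real^'n" where "y = axis i 1 - axis j 1"
  have yy: "y \<bullet> y = 2"
  proof -
    have "y \<bullet> y = axis i 1 \<bullet> axis i (1::real) - axis i 1 \<bullet> axis j (1::real)
       - (axis j 1 \<bullet> axis i (1::real) - axis j 1 \<bullet> axis j (1::real))"
      unfolding y_def by (simp only: inner_diff_left inner_diff_right)
    also have "\<dots> = 2" using ij(3) by (simp add: inner_axis_axis)
    finally show ?thesis .
  qed
  have Aji: "A $ j $ i = A $ i $ j" by (rule Asym)
  have Aii: "A $ k $ k = 0" for k by (simp add: A_def hadj_def)
  have Ay: "A *v y = column i A - column j A"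
    unfolding y_def by (simp only: matrix_vector_mult_diff_distrib matrix_vector_mult_basis)
  have yAy: "y \<bullet> (A *v y) = - 2 * A $ i $ j"
  proof -
    have "y \<bullet> (A *v y) = axis i 1 \<bullet> column i A - axis i 1 \<bullet> column j A
       - (axis j 1 \<bullet> column i A - axis j 1 \<bullet> column j A)"
      unfolding Ay by (simp only: y_def inner_diff_left inner_diff_right)
    also have "\<dots> = A $ i $ i - A $ i $ j - (A $ j $ i - A $ j $ j)"
      by (simp only: ax_inner col_nth)
    also have "\<dots> = - 2 * A $ i $ j" using Aji Aii[of i] Aii[of j] by linarith
    finally show ?thesis .
  qed
  have "\<mu> * 2 \<le> - 2 * A $ i $ j" using ge[of y] unfolding yy yAy .
  then have "\<mu> \<le> - (1 / (r - 1))" using Aij by linarith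
  then have "\<bar>\<mu>\<bar> \<ge> 1 / (r - 1)" by linarith
  then have fin: "\<bar>\<mu>\<bar> \<ge> 1 / (real (hrank E) - 1)" unfolding r_def .
  have lm2: "lambda_min (hadj E) = \<mu>" using lm unfolding A_def .
  show ?thesis unfolding lm2 by (rule fin)
qed

end
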